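(* The maximum achievable average rate of the optimal buffer-aided selection rule is $$\bar R_{SD}=\sum_{k=1}^M\int_0^\infty\log_2(1+x)\,f^*_{\Gamma_{kD}}(x)\,dx,$$ where $f^*_{\Gamma_{kD}}$ is $f_{\Gamma_{kD}}$ evaluated at $\mu_k=\mu_k^*$ for all $k$. If all $2M$ links are i.i.d. with common PDF $f_\gamma$ and CDF $F_\gamma$, this simplifies to $$\bar R_{SD}=M\int_0^\infty\log_2(1+x)\,f_\gamma(x)\,\big(F_\gamma(x)\big)^{2M-1}dx.$$
   Context: Network of a source, $M$ half-duplex buffer-aided relays and a destination. In each time slot the $2M$ SNRs $\gamma_{Sk}$ (source to relay $k$) and $\gamma_{kD}$ (relay $k$ to destination) are mutually independent nonnegative random variables with PDFs $f_{\gamma_\alpha}$ and CDFs $F_{\gamma_\alpha}$, stationary/ergodic across slots. For constants $\mu_1,\dots,\mu_M\in(0,1)$ and $x>0$, $$f_{\Gamma_{kD}}(x)=f_{\gamma_{kD}}(x)F_{\gamma_{Sk}}\!\big((1+x)^{\frac{1-\mu_k}{\mu_k}}-1\big)\prod_{j\ne k}F_{\gamma_{Sj}}\!\big((1+x)^{\frac{1-\mu_k}{\mu_j}}-1\big)F_{\gamma_{jD}}\!\big((1+x)^{\frac{1-\mu_k}{1-\mu_j}}-1\big),$$ and analogously $f_{\Gamma_{Sk}}(x)=f_{\gamma_{Sk}}(x)F_{\gamma_{kD}}((1+x)^{\frac{\mu_k}{1-\mu_k}}-1)\prod_{j\ne k}F_{\gamma_{Sj}}((1+x)^{\frac{\mu_k}{\mu_j}}-1)F_{\gamma_{jD}}((1+x)^{\frac{\mu_k}{1-\mu_j}}-1)$.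 The optimal constants $\mu_k^*$ are a solution of $\int_0^\infty\log_2(1+x)f_{\Gamma_{Sk}}(x)dx=\int_0^\infty\log_2(1+x)f_{\Gamma_{kD}}(x)dx$ for $k=1,\dots,M$ (and $\mu_k^*=1/2$ in the i.i.d. case). The optimal rule selects, in each slot, relay $k$ to receive iff $\mu_k^*\log_2(1+\gamma_{Sk})$, or to transmit iff $(1-\mu_k^* )\log_2(1+\gamma_{kD})$, is the largest of the $2M$ quantities $\mu_j^*\log_2(1+\gamma_{Sj}),(1-\mu_j^* )\log_2(1+\gamma_{jD})$. *)

theory Defs
  imports "HOL-Probability.Probability"
begin

definition rv_cdf :: "'a measure \<Rightarrow> ('a \<Rightarrow> real) \<Rightarrow> real \<Rightarrow> real" where
  "rv_cdf M X x = measure M {\<omega> \<in> space M. X \<omega> \<le> x}"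

text \<open>The density f_{Gamma_kD} (relays indexed 0..m-1). fS, fD: PDFs; FS, FD: CDFs;
  mu: the constants mu_k.\<close>
definition f_GammaD ::
  "nat \<Rightarrow> (nat \<Rightarrow> real \<Rightarrow> real) \<Rightarrow> (nat \<Rightarrow> real \<Rightarrow> real) \<Rightarrow>
   (nat \<Rightarrow> real \<Rightarrow> real) \<Rightarrow> (nat \<Rightarrow> real \<Rightarrow> real) \<Rightarrow> (nat \<Rightarrow> real) \<Rightarrow> nat \<Rightarrow> real \<Rightarrow> real" where
  "f_GammaD m fS FS fD FD mu k x =
     fD k x * FS k ((1 + x) powr ((1 - mu k) / mu k) - 1) *
     (\<Prod>j\<in>{..<m} - {k}. FS j ((1 + x) powr ((1 - mu k) / mu j) - 1) *
                          FD j ((1 + x) powr ((1 - mu k) / (1 - mu j)) - 1))"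

definition f_GammaS ::
  "nat \<Rightarrow> (nat \<Rightarrow> real \<Rightarrow> real) \<Rightarrow> (nat \<Rightarrow> real \<Rightarrow> real) \<Rightarrow>
   (nat \<Rightarrow> real \<Rightarrow> real) \<Rightarrow> (nat \<Rightarrow> real \<Rightarrow> real) \<Rightarrow> (nat \<Rightarrow> real) \<Rightarrow> nat \<Rightarrow> real \<Rightarrow> real" where
  "f_GammaS m fS FS fD FD mu k x =
     fS k x * FD k ((1 + x) powr (mu k / (1 - mu k)) - 1) *
     (\<Prod>j\<in>{..<m} - {k}. FS j ((1 + x) powr (mu k / mu j) - 1) *
                          FD j ((1 + x) powr (mu k / (1 - mu j)) - 1))"

definition selected_tx ::
  "nat \<Rightarrow> (nat \<Rightarrow> 'a \<Rightarrow> real) \<Rightarrow> (nat \<Rightarrow> 'a \<Rightarrow> real) \<Rightarrow> (nat \<Rightarrow> real) \<Rightarrow> nat \<Rightarrow> 'a \<Rightarrow> bool" where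
  "selected_tx m gS gD mu k w \<longleftrightarrow>
     (\<forall>j<m. (1 - mu k) * log 2 (1 + gD k w) > mu j * log 2 (1 + gS j w)) \<and>
     (\<forall>j<m. j \<noteq> k \<longrightarrow> (1 - mu k) * log 2 (1 + gD k w) > (1 - mu j) * log 2 (1 + gD j w))"

definition avg_rate_SD ::
  "'a measure \<Rightarrow> nat \<Rightarrow> (nat \<Rightarrow> 'a \<Rightarrow> real) \<Rightarrow> (nat \<Rightarrow> 'a \<Rightarrow> real) \<Rightarrow> (nat \<Rightarrow> real) \<Rightarrow> real" where
  "avg_rate_SD M m gS gD mu =
     (\<Sum>k<m. \<integral>w. (if selected_tx m gS gD mu k w then log 2 (1 + gD k w) else 0) \<partial>M)"

end

theory Submission imports Defs begin

lemma indep_cond: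
  fixes X :: "'i \<Rightarrow> 'a \<Rightarrow> real" and h :: "'i \<Rightarrow> real \<Rightarrow> real"
    and h0 :: "real \<Rightarrow> real" and g :: "real \<Rightarrow> ennreal"
  assumes P: "prob_space M" and fin: "finite I" and i0: "i0 \<in> I"
    and indep: "prob_space.indep_vars M (\<lambda>_. borel) X I"
    and Xm: "\<And>i. i \<in> I \<Longrightarrow> X i \<in> borel_measurable M"
    and hm: "\<And>i. i \<in> I \<Longrightarrow> h i \<in> borel_measurable borel"
    and h0m: "h0 \<in> borel_measurable borel" and gm: "g \<in> borel_measurable borel"
  shows "(\<integral>\<^sup>+\<omega>. g (X i0 \<omega>) * (\<Prod>i\<in>I-{i0}. indicator {t. h i t < h0 (X i0 \<omega>)} (X i \<omega>)) \<partial>M) =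
         (\<integral>\<^sup>+\<omega>. g (X i0 \<omega>) * (\<Prod>i\<in>I-{i0}. emeasure M {\<omega>'\<in>space M. h i (X i \<omega>') < h0 (X i0 \<omega>)}) \<partial>M)"
proof -
  interpret prob_space M by (rule P)
  define Y where "Y i = (if i \<in> I then X i else (\<lambda>_. 0::real))" for i
  define H where "H i = (if i \<in> I then h i else (\<lambda>_. 0::real))" for i
  have Ym[measurable]: "Y i \<in> borel_measurable M" for i using Xm by (simp add: Y_def)
  have Hm[measurable]: "H i \<in> borel_measurable borel" for i using hm by (simp add: H_def)
  note [measurable] = h0m gm
  have indY: "indep_vars (\<lambda>_. borel) Y I"
    using indep by (subst indep_vars_cong[of I I Y X]) (auto simp: Y_def)
  let ?N = "\<lambda>i. distr M borel (Y i)"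
  interpret PS: product_sigma_finite ?N
    unfolding product_sigma_finite_def
    by (auto intro!: prob_space_imp_sigma_finite prob_space_distr)
  define J where "J = I - {i0}"
  have IJ: "I = insert i0 J" "i0 \<notin> J" "finite J" using i0 fin by (auto simp: J_def)
  define F where "F y = g (y i0) * (\<Prod>i\<in>J. indicator {t. H i t < h0 (y i0)} (y i))" for y :: "'i \<Rightarrow> real"
  have Fm[measurable]: "F \<in> borel_measurable (Pi\<^sub>M I (\<lambda>_. borel))"
  proof -
    have eq: "F = (\<lambda>y. g (y i0) * (\<Prod>i\<in>J. if H i (y i) < h0 (y i0) then 1 else 0))"
      unfolding F_def by (auto simp: indicator_def fun_eq_iff of_bool_def intro!: prod.cong)
    have [measurable]: "i0 \<in> I" by (rule i0)
    have "(\<lambda>y. \<Prod>i\<in>J. if H i (y i) < h0 (y i0) then 1 else (0::ennreal)) \<in> borel_measurable (Pi\<^sub>M I (\<lambda>_. borel))"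
    proof (rule borel_measurable_prod_ennreal)
      fix i assume "i \<in> J"
      then have [measurable]: "i \<in> I" using IJ by auto
      show "(\<lambda>y. if H i (y i) < h0 (y i0) then 1 else (0::ennreal)) \<in> borel_measurable (Pi\<^sub>M I (\<lambda>_. borel))"
        by measurable
    qed
    then show ?thesis unfolding eq by measurable
  qed
  have LHS: "(\<integral>\<^sup>+\<omega>. g (X i0 \<omega>) * (\<Prod>i\<in>I-{i0}. indicator {t. h i t < h0 (X i0 \<omega>)} (X i \<omega>)) \<partial>M)
      = (\<integral>\<^sup>+\<omega>. F (\<lambda>i\<in>I. Y i \<omega>) \<partial>M)"
    using i0 by (intro nn_integral_cong) (auto simp: F_def J_def Y_def H_def intro!: prod.cong)
  also have "\<dots> = (\<integral>\<^sup>+y. F y \<partial>distr M (Pi\<^sub>M I (\<lambda>_. borel)) (\<lambda>\<omega>. \<lambda>i\<in>I. Y i \<omega>))"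
    by (subst nn_integral_distr) auto
  also have "distr M (Pi\<^sub>M I (\<lambda>_. borel)) (\<lambda>\<omega>. \<lambda>i\<in>I. Y i \<omega>) = Pi\<^sub>M I ?N"
    using indep_vars_iff_distr_eq_PiM[THEN iffD1, OF _ _ indY] i0 by auto
  also have "(\<integral>\<^sup>+y. F y \<partial>Pi\<^sub>M I ?N) = (\<integral>\<^sup>+z. (\<integral>\<^sup>+y. F (y(i0:=z)) \<partial>Pi\<^sub>M J ?N) \<partial>?N i0)"
    unfolding IJ(1) using IJ by (intro PS.product_nn_integral_insert_rev) (auto simp: IJ(1)[symmetric])
  also have "\<dots> = (\<integral>\<^sup>+z. g z * (\<Prod>i\<in>J. ennreal (measure M {\<omega>'\<in>space M. H i (Y i \<omega>') < h0 z})) \<partial>?N i0)"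
  proof (intro nn_integral_cong)
    fix z
    have "(\<integral>\<^sup>+y. F (y(i0:=z)) \<partial>Pi\<^sub>M J ?N) = (\<integral>\<^sup>+y. g z * (\<Prod>i\<in>J. indicator {t. H i t < h0 z} (y i)) \<partial>Pi\<^sub>M J ?N)"
      using IJ by (intro nn_integral_cong) (auto simp: F_def intro!: prod.cong arg_cong2[where f="(*)"])
    also have "\<dots> = g z * (\<integral>\<^sup>+y. (\<Prod>i\<in>J. indicator {t. H i t < h0 z} (y i)) \<partial>Pi\<^sub>M J ?N)"
      by (rule nn_integral_cmult) measurable
    also have "(\<integral>\<^sup>+y. (\<Prod>i\<in>J. indicator {t. H i t < h0 z} (y i)) \<partial>Pi\<^sub>M J ?N)
        = (\<Prod>i\<in>J. (\<integral>\<^sup>+t. indicator {t. H i t < h0 z} t \<partial>?N i))"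
      using IJ by (intro PS.product_nn_integral_prod) auto
    also have "\<dots> = (\<Prod>i\<in>J. ennreal (measure M {\<omega>'\<in>space M. H i (Y i \<omega>') < h0 z}))"
    proof (intro prod.cong refl)
      fix i
      have "(\<integral>\<^sup>+t. indicator {t. H i t < h0 z} t \<partial>?N i) = emeasure (?N i) {t. H i t < h0 z}"
        by (rule nn_integral_indicator) measurable
      also have "\<dots> = emeasure M {\<omega>'\<in>space M. H i (Y i \<omega>') < h0 z}"
        by (subst emeasure_distr) (auto intro!: arg_cong[where f="emeasure M"])
      finally show "(\<integral>\<^sup>+t. indicator {t. H i t < h0 z} t \<partial>?N i) = ennreal (measure M {\<omega>'\<in>space M. H i (Y i \<omega>') < h0 z})"
        by (simp add: emeasure_eq_measure)
    qed
    finally show "(\<integral>\<^sup>+y. F (y(i0:=z)) \<partial>Pi\<^sub>M J ?N) = g z * (\<Prod>i\<in>J. ennreal (measure M {\<omega>'\<in>space M. H i (Y i \<omega>') < h0 z}))" .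
  qed
  also have "\<dots> = (\<integral>\<^sup>+\<omega>. g (Y i0 \<omega>) * (\<Prod>i\<in>J. ennreal (measure M {\<omega>'\<in>space M. H i (Y i \<omega>') < h0 (Y i0 \<omega>)})) \<partial>M)"
  proof -
    have mono: "(\<lambda>c. measure M {\<omega>'\<in>space M. H i (Y i \<omega>') < c}) \<in> borel_measurable borel" for i
      by (rule borel_measurable_mono) (auto simp: mono_def intro!: finite_measure_mono)
    have gm2: "(\<lambda>z. g z * (\<Prod>i\<in>J. ennreal (measure M {\<omega>'\<in>space M. H i (Y i \<omega>') < h0 z}))) \<in> borel_measurable borel"
    proof (intro borel_measurable_times_ennreal gm borel_measurable_prod_ennreal)
      fix i
      have "(\<lambda>z. measure M {\<omega>'\<in>space M. H i (Y i \<omega>') < h0 z}) \<in> borel_measurable borel"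
        using measurable_compose[OF h0m mono[of i]] by simp
      then show "(\<lambda>z. ennreal (measure M {\<omega>'\<in>space M. H i (Y i \<omega>') < h0 z})) \<in> borel_measurable borel"
        by measurable
    qed
    show ?thesis using nn_integral_distr[OF Ym[of i0], of "\<lambda>z. g z * (\<Prod>i\<in>J. ennreal (measure M {\<omega>'\<in>space M. H i (Y i \<omega>') < h0 z}))"] gm2 by simp
  qed
  also have "\<dots> = (\<integral>\<^sup>+\<omega>. g (X i0 \<omega>) * (\<Prod>i\<in>I-{i0}. emeasure M {\<omega>'\<in>space M. h i (X i \<omega>') < h0 (X i0 \<omega>)}) \<partial>M)"
    using i0 by (intro nn_integral_cong) (auto simp: J_def Y_def H_def emeasure_eq_measure intro!: prod.cong)
  finally show ?thesis .
qed


lemma prod_rearr: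
  fixes A B :: "nat \<Rightarrow> real"
  assumes k: "k < m"
  shows "(\<Prod>i\<in>(Inl ` {..<m} \<union> Inr ` {..<m}) - {Inr k}. case i of Inl j \<Rightarrow> A j | Inr j \<Rightarrow> B j)
         = A k * (\<Prod>j\<in>{..<m}-{k}. A j * B j)"
proof -
  have J: "(Inl ` {..<m} \<union> Inr ` {..<m}) - {Inr k} = Inl ` {..<m} \<union> Inr ` ({..<m} - {k})" by auto
  have "(\<Prod>i\<in>Inl ` {..<m} \<union> Inr ` ({..<m} - {k}). case i of Inl j \<Rightarrow> A j | Inr j \<Rightarrow> B j)
      = (\<Prod>i\<in>Inl ` {..<m}. case i of Inl j \<Rightarrow> A j | Inr j \<Rightarrow> B j) * (\<Prod>i\<in>Inr ` ({..<m} - {k}). case i of Inl j \<Rightarrow> A j | Inr j \<Rightarrow> B j)"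
    by (rule prod.union_disjoint) auto
  also have "\<dots> = (\<Prod>j\<in>{..<m}. A j) * (\<Prod>j\<in>{..<m} - {k}. B j)"
    by (simp add: prod.reindex)
  also have "(\<Prod>j\<in>{..<m}. A j) = A k * (\<Prod>j\<in>{..<m} - {k}. A j)"
    using k by (subst prod.remove[of _ k]) auto
  finally show ?thesis unfolding J by (simp add: prod.distrib mult.assoc)
qed

lemma cdf_strict:
  fixes X :: "'a \<Rightarrow> real" and f :: "real \<Rightarrow> real"
  assumes P: "prob_space M" and D: "distributed M lborel X (\<lambda>x. ennreal (f x))"
    and nn: "\<And>w. w \<in> space M \<Longrightarrow> X w \<ge> 0"
    and a: "0 < a" and b: "0 < b" and x: "0 \<le> x"
  shows "emeasure M {w\<in>space M. a * log 2 (1 + X w) < b * log 2 (1 + x)}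
       = ennreal (rv_cdf M X ((1 + x) powr (b / a) - 1))"
proof -
  interpret prob_space M by (rule P)
  have Xm[measurable]: "X \<in> borel_measurable M"
    using distributed_measurable[OF D] by simp
  define c where "c = (1 + x) powr (b / a) - 1"
  have iff: "a * log 2 (1 + t) < b * log 2 (1 + x) \<longleftrightarrow> t < c" if t: "0 \<le> t" for t
  proof -
    have "a * log 2 (1 + t) < b * log 2 (1 + x) \<longleftrightarrow> log 2 (1 + t) < (b / a) * log 2 (1 + x)"
      using a by (simp add: field_simps)
    also have "(b / a) * log 2 (1 + x) = log 2 ((1 + x) powr (b / a))"
      using x by (simp add: log_powr)
    also have "log 2 (1 + t) < log 2 ((1 + x) powr (b / a)) \<longleftrightarrow> 1 + t < (1 + x) powr (b / a)"
      using t x by (intro log_less_cancel_iff) auto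
    finally show ?thesis by (simp add: c_def; linarith)
  qed
  have S: "{w\<in>space M. a * log 2 (1 + X w) < b * log 2 (1 + x)} = {w\<in>space M. X w < c}"
    using iff nn by auto
  have z: "emeasure M {w\<in>space M. X w = c} = 0"
  proof -
    have "emeasure M (X -` {c} \<inter> space M) = (\<integral>\<^sup>+t. ennreal (f t) * indicator {c} t \<partial>lborel)"
      by (rule distributed_emeasure[OF D]) simp
    also have "\<dots> = 0"
      by (rule nn_integral_null_set) (simp add: null_sets_def)
    finally show ?thesis by (simp add: vimage_def Int_def conj_commute)
  qed
  have "emeasure M {w\<in>space M. X w \<le> c} = emeasure M ({w\<in>space M. X w < c} \<union> {w\<in>space M. X w = c})"
    by (intro arg_cong[where f="emeasure M"]) auto
  also have "\<dots> = emeasure M {w\<in>space M. X w < c} + emeasure M {w\<in>space M. X w = c}"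
    by (rule plus_emeasure[symmetric]) auto
  finally have "emeasure M {w\<in>space M. X w < c} = emeasure M {w\<in>space M. X w \<le> c}" using z by simp
  then show ?thesis unfolding S rv_cdf_def c_def[symmetric] by (simp add: emeasure_eq_measure)
qed


lemma rate_k:
  fixes M :: "'a measure" and m :: nat
    and gS gD :: "nat \<Rightarrow> 'a \<Rightarrow> real"
    and fS fD :: "nat \<Rightarrow> real \<Rightarrow> real"
    and mu :: "nat \<Rightarrow> real"
  assumes P: "prob_space M"
    and indep: "prob_space.indep_vars M (\<lambda>_. borel)
                  (\<lambda>i. case i of Inl k \<Rightarrow> gS k | Inr k \<Rightarrow> gD k)
                  (Inl ` {..<m} \<union> Inr ` {..<m})"
    and distS: "\<And>k. k < m \<Longrightarrow> distributed M lborel (gS k) (\<lambda>x. ennreal (fS k x))"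
    and distD: "\<And>k. k < m \<Longrightarrow> distributed M lborel (gD k) (\<lambda>x. ennreal (fD k x))"
    and fD_nonneg: "\<And>k x. k < m \<Longrightarrow> fD k x \<ge> 0"
    and gS_nonneg: "\<And>k w. k < m \<Longrightarrow> w \<in> space M \<Longrightarrow> gS k w \<ge> 0"
    and gD_nonneg: "\<And>k w. k < m \<Longrightarrow> w \<in> space M \<Longrightarrow> gD k w \<ge> 0"
    and mu_range: "\<And>k. k < m \<Longrightarrow> 0 < mu k \<and> mu k < 1"
    and k: "k < m"
  shows "(\<integral>w. (if selected_tx m gS gD mu k w then log 2 (1 + gD k w) else 0) \<partial>M) =
         (LBINT x:{0..}. log 2 (1 + x) *
              f_GammaD m fS (\<lambda>j. rv_cdf M (gS j)) fD (\<lambda>j. rv_cdf M (gD j)) mu k x)"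
proof -
  interpret prob_space M by (rule P)
  have gSm: "gS j \<in> borel_measurable M" if "j < m" for j
    using distributed_measurable[OF distS[OF that]] by simp
  have gDm: "gD j \<in> borel_measurable M" if "j < m" for j
    using distributed_measurable[OF distD[OF that]] by simp
  have fDm: "fD k \<in> borel_measurable borel"
    using distributed_real_measurable[OF _ distD[OF k]] fD_nonneg[OF k] by simp
  define I where "I = Inl ` {..<m} \<union> Inr ` {..<m}"
  define X where "X i = (case i of Inl j \<Rightarrow> gS j | Inr j \<Rightarrow> gD j)" for i
  define i0 where "i0 = (Inr k :: nat + nat)"
  define J where "J = I - {i0}"
  define a where "a i = (case i of Inl j \<Rightarrow> mu j | Inr j \<Rightarrow> 1 - mu j)" for i
  define h where "h i t = a i * log 2 (1 + t)" for i and t :: real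
  define h0 where "h0 x = (1 - mu k) * log 2 (1 + x)" for x :: real
  define g where "g x = ennreal (log 2 (1 + x))" for x :: real
  have finI: "finite I" "finite J" by (auto simp: I_def J_def)
  have i0I: "i0 \<in> I" using k by (auto simp: I_def i0_def)
  have XI: "X i0 = gD k" by (simp add: X_def i0_def)
  have Xm: "X i \<in> borel_measurable M" if "i \<in> I" for i
    using that gSm gDm by (auto simp: I_def X_def)
  have Xnn: "X i w \<ge> 0" if "i \<in> I" "w \<in> space M" for i w
    using that gS_nonneg gD_nonneg by (auto simp: I_def X_def)
  have apos: "0 < a i" if "i \<in> I" for i
    using that mu_range by (auto simp: I_def a_def)
  have ind: "indep_vars (\<lambda>_. borel) X I"
    using indep unfolding I_def X_def by simp
  have sel_iff: "selected_tx m gS gD mu k w \<longleftrightarrow> (\<forall>i\<in>J. h i (X i w) < h0 (X i0 w))" for w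
  proof -
    have Jalt: "J = Inl ` {..<m} \<union> Inr ` ({..<m} - {k})" by (auto simp: J_def I_def i0_def)
    show ?thesis
      unfolding selected_tx_def Jalt h_def h0_def a_def X_def i0_def
      by (auto simp: mult.commute ball_Un)
  qed
  have gDnn: "0 \<le> log 2 (1 + gD k w)" if "w \<in> space M" for w
    using gD_nonneg[OF k that] by simp
  have step1: "ennreal (if selected_tx m gS gD mu k w then log 2 (1 + gD k w) else 0)
     = g (X i0 w) * (\<Prod>i\<in>J. indicator {t. h i t < h0 (X i0 w)} (X i w))" if w: "w \<in> space M" for w
  proof (cases "selected_tx m gS gD mu k w")
    case True
    then show ?thesis unfolding sel_iff by (simp add: g_def XI)
  next
    case False
    then obtain i where "i \<in> J" "\<not> h i (X i w) < h0 (X i0 w)" unfolding sel_iff by auto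
    then have "(\<Prod>i\<in>J. indicator {t. h i t < h0 (X i0 w)} (X i w) :: ennreal) = 0"
      using finI by (intro prod_zero) (auto intro!: bexI[of _ i])
    then show ?thesis using False by simp
  qed
  define R where "R w = log 2 (1 + gD k w) * (\<Prod>i\<in>J. if h i (X i w) < h0 (X i0 w) then 1 else (0::real))" for w
  have Rm: "R \<in> borel_measurable M"
    unfolding R_def
  proof (intro borel_measurable_times borel_measurable_prod)
    show "(\<lambda>w. log 2 (1 + gD k w)) \<in> borel_measurable M" using gDm[OF k] by measurable
    fix i assume "i \<in> J"
    then have [measurable]: "X i \<in> borel_measurable M" using Xm by (auto simp: J_def)
    have [measurable]: "X i0 \<in> borel_measurable M" using Xm i0I by auto
    show "(\<lambda>w. if h i (X i w) < h0 (X i0 w) then 1 else (0::real)) \<in> borel_measurable M"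
      unfolding h_def h0_def by measurable
  qed
  have R_eq: "R w = (if selected_tx m gS gD mu k w then log 2 (1 + gD k w) else 0)" for w
    unfolding sel_iff R_def using finI
    by (auto simp: prod_zero XI)
  have LHS1: "(\<integral>w. (if selected_tx m gS gD mu k w then log 2 (1 + gD k w) else 0) \<partial>M)
     = enn2real (\<integral>\<^sup>+w. ennreal (if selected_tx m gS gD mu k w then log 2 (1 + gD k w) else 0) \<partial>M)"
  proof (rule integral_eq_nn_integral)
    have "(\<lambda>w. if selected_tx m gS gD mu k w then log 2 (1 + gD k w) else 0) = R"
      by (simp add: fun_eq_iff R_eq)
    then show "(\<lambda>w. if selected_tx m gS gD mu k w then log 2 (1 + gD k w) else 0) \<in> borel_measurable M"
      using Rm by simp
    show "AE w in M. 0 \<le> (if selected_tx m gS gD mu k w then log 2 (1 + gD k w) else 0)"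
      using gDnn by auto
  qed
  have hm: "h i \<in> borel_measurable borel" for i unfolding h_def by measurable
  have h0m: "h0 \<in> borel_measurable borel" unfolding h0_def by measurable
  have gm: "g \<in> borel_measurable borel" unfolding g_def by measurable
  have S2: "(\<integral>\<^sup>+w. ennreal (if selected_tx m gS gD mu k w then log 2 (1 + gD k w) else 0) \<partial>M)
      = (\<integral>\<^sup>+w. g (X i0 w) * (\<Prod>i\<in>I-{i0}. indicator {t. h i t < h0 (X i0 w)} (X i w)) \<partial>M)"
    using step1 unfolding J_def by (intro nn_integral_cong) auto
  also have "\<dots> = (\<integral>\<^sup>+w. g (X i0 w) * (\<Prod>i\<in>I-{i0}. emeasure M {w'\<in>space M. h i (X i w') < h0 (X i0 w)}) \<partial>M)"
    by (rule indep_cond[OF P finI(1) i0I ind Xm hm h0m gm])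
  finally have S3: "(\<integral>\<^sup>+w. ennreal (if selected_tx m gS gD mu k w then log 2 (1 + gD k w) else 0) \<partial>M)
      = (\<integral>\<^sup>+w. g (X i0 w) * (\<Prod>i\<in>J. emeasure M {w'\<in>space M. h i (X i w') < h0 (X i0 w)}) \<partial>M)"
    unfolding J_def .
  define fX where "fX i = (case i of Inl j \<Rightarrow> fS j | Inr j \<Rightarrow> fD j)" for i
  have distX: "distributed M lborel (X i) (\<lambda>x. ennreal (fX i x))" if "i \<in> I" for i
    using that distS distD by (auto simp: I_def X_def fX_def)
  define Q where "Q x = (\<Prod>i\<in>J. rv_cdf M (X i) ((1 + x) powr ((1 - mu k) / a i) - 1))" for x
  define \<Phi> where "\<Phi> x = indicator {0..} x * (log 2 (1 + x) * Q x)" for x :: real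
  have bpos: "0 < 1 - mu k" using mu_range[OF k] by simp
  have cdf_nn: "0 \<le> rv_cdf M Y x" for Y x by (simp add: rv_cdf_def)
  have Qnn: "0 \<le> Q x" for x unfolding Q_def by (intro prod_nonneg) (simp add: cdf_nn)
  have S4: "g (X i0 w) * (\<Prod>i\<in>J. emeasure M {w'\<in>space M. h i (X i w') < h0 (X i0 w)}) = ennreal (\<Phi> (gD k w))"
    if w: "w \<in> space M" for w
  proof -
    have x: "0 \<le> gD k w" using gD_nonneg[OF k w] .
    have "(\<Prod>i\<in>J. emeasure M {w'\<in>space M. h i (X i w') < h0 (X i0 w)})
        = (\<Prod>i\<in>J. ennreal (rv_cdf M (X i) ((1 + gD k w) powr ((1 - mu k) / a i) - 1)))"
    proof (intro prod.cong refl)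
      fix i assume "i \<in> J"
      then have iI: "i \<in> I" by (simp add: J_def)
      show "emeasure M {w'\<in>space M. h i (X i w') < h0 (X i0 w)} = ennreal (rv_cdf M (X i) ((1 + gD k w) powr ((1 - mu k) / a i) - 1))"
        unfolding h_def h0_def XI
        by (rule cdf_strict[OF P distX[OF iI] Xnn[OF iI] apos[OF iI] bpos x])
    qed
    also have "\<dots> = ennreal (Q (gD k w))" unfolding Q_def by (rule prod_ennreal) (simp add: cdf_nn)
    finally show ?thesis using x unfolding \<Phi>_def g_def XI
      by (simp add: ennreal_mult[symmetric] Qnn)
  qed
  have Qm: "Q \<in> borel_measurable borel"
    unfolding Q_def
  proof (rule borel_measurable_prod)
    fix i assume "i \<in> J"
    then have iI: "i \<in> I" by (simp add: J_def)
    have [measurable]: "X i \<in> borel_measurable M" by (rule Xm[OF iI])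
    have mono: "rv_cdf M (X i) \<in> borel_measurable borel"
      unfolding rv_cdf_def
      by (rule borel_measurable_mono) (auto simp: mono_def intro!: finite_measure_mono)
    have c: "(\<lambda>x::real. (1 + x) powr ((1 - mu k) / a i) - 1) \<in> borel_measurable borel" by measurable
    show "(\<lambda>x. rv_cdf M (X i) ((1 + x) powr ((1 - mu k) / a i) - 1)) \<in> borel_measurable borel"
      using measurable_compose[OF c mono] by (simp add: o_def)
  qed
  have \<Phi>m: "\<Phi> \<in> borel_measurable borel" unfolding \<Phi>_def using Qm by measurable
  have GQ: "f_GammaD m fS (\<lambda>j. rv_cdf M (gS j)) fD (\<lambda>j. rv_cdf M (gD j)) mu k x = fD k x * Q x" for x
  proof -
    have "Q x = (\<Prod>i\<in>(Inl ` {..<m} \<union> Inr ` {..<m}) - {Inr k}. case i of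
             Inl j \<Rightarrow> rv_cdf M (gS j) ((1 + x) powr ((1 - mu k) / mu j) - 1)
           | Inr j \<Rightarrow> rv_cdf M (gD j) ((1 + x) powr ((1 - mu k) / (1 - mu j)) - 1))"
      unfolding Q_def J_def I_def i0_def
      by (intro prod.cong refl) (auto simp: X_def a_def split: sum.split)
    also have "\<dots> = rv_cdf M (gS k) ((1 + x) powr ((1 - mu k) / mu k) - 1) *
        (\<Prod>j\<in>{..<m}-{k}. rv_cdf M (gS j) ((1 + x) powr ((1 - mu k) / mu j) - 1) *
           rv_cdf M (gD j) ((1 + x) powr ((1 - mu k) / (1 - mu j)) - 1))"
      by (rule prod_rearr[OF k])
    finally show ?thesis unfolding f_GammaD_def by (simp add: mult.assoc)
  qed
  have "(\<integral>\<^sup>+w. ennreal (if selected_tx m gS gD mu k w then log 2 (1 + gD k w) else 0) \<partial>M)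
      = (\<integral>\<^sup>+w. ennreal (\<Phi> (gD k w)) \<partial>M)"
    unfolding S3 by (intro nn_integral_cong) (rule S4)
  also have "\<dots> = (\<integral>\<^sup>+x. ennreal (fD k x) * ennreal (\<Phi> x) \<partial>lborel)"
    by (rule distributed_nn_integral[OF distD[OF k], symmetric]) (use \<Phi>m in simp)
  also have "\<dots> = (\<integral>\<^sup>+x. ennreal (indicator {0..} x *\<^sub>R (log 2 (1 + x) *
              f_GammaD m fS (\<lambda>j. rv_cdf M (gS j)) fD (\<lambda>j. rv_cdf M (gD j)) mu k x)) \<partial>lborel)"
  proof (intro nn_integral_cong)
    fix x :: real
    have "indicator {0..} x *\<^sub>R (log 2 (1 + x) *
              f_GammaD m fS (\<lambda>j. rv_cdf M (gS j)) fD (\<lambda>j. rv_cdf M (gD j)) mu k x) = fD k x * \<Phi> x"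
      unfolding GQ \<Phi>_def by (simp add: indicator_def)
    then show "ennreal (fD k x) * ennreal (\<Phi> x) = ennreal (indicator {0..} x *\<^sub>R (log 2 (1 + x) *
              f_GammaD m fS (\<lambda>j. rv_cdf M (gS j)) fD (\<lambda>j. rv_cdf M (gD j)) mu k x))"
      using fD_nonneg[OF k] by (simp add: ennreal_mult')
  qed
  finally have NN: "(\<integral>\<^sup>+w. ennreal (if selected_tx m gS gD mu k w then log 2 (1 + gD k w) else 0) \<partial>M) = 
     (\<integral>\<^sup>+x. ennreal (indicator {0..} x *\<^sub>R (log 2 (1 + x) *
              f_GammaD m fS (\<lambda>j. rv_cdf M (gS j)) fD (\<lambda>j. rv_cdf M (gD j)) mu k x)) \<partial>lborel)" .
  have Fx: "(\<lambda>x. indicator {0..} x *\<^sub>R (log 2 (1 + x) *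
              f_GammaD m fS (\<lambda>j. rv_cdf M (gS j)) fD (\<lambda>j. rv_cdf M (gD j)) mu k x)) = (\<lambda>x. fD k x * \<Phi> x)"
    unfolding GQ \<Phi>_def by (simp add: indicator_def fun_eq_iff)
  have "(LBINT x:{0..}. log 2 (1 + x) *
              f_GammaD m fS (\<lambda>j. rv_cdf M (gS j)) fD (\<lambda>j. rv_cdf M (gD j)) mu k x)
     = enn2real (\<integral>\<^sup>+x. ennreal (indicator {0..} x *\<^sub>R (log 2 (1 + x) *
              f_GammaD m fS (\<lambda>j. rv_cdf M (gS j)) fD (\<lambda>j. rv_cdf M (gD j)) mu k x)) \<partial>lborel)"
    unfolding set_lebesgue_integral_def
  proof (rule integral_eq_nn_integral)
    show "(\<lambda>x. indicator {0..} x *\<^sub>R (log 2 (1 + x) *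
              f_GammaD m fS (\<lambda>j. rv_cdf M (gS j)) fD (\<lambda>j. rv_cdf M (gD j)) mu k x)) \<in> borel_measurable lborel"
      unfolding Fx using fDm \<Phi>m by simp
    have "0 \<le> fD k x * \<Phi> x" for x
      using fD_nonneg[OF k] Qnn by (auto simp: \<Phi>_def indicator_def)
    then show "AE x in lborel. 0 \<le> indicator {0..} x *\<^sub>R (log 2 (1 + x) *
              f_GammaD m fS (\<lambda>j. rv_cdf M (gS j)) fD (\<lambda>j. rv_cdf M (gD j)) mu k x)"
      using Fx unfolding fun_eq_iff by (metis (mono_tags, lifting) AE_I2)
  qed
  then show ?thesis using LHS1 NN by simp
qed

lemma cdf_same:
  assumes "distributed M lborel X (\<lambda>x. ennreal (f x))" "distributed M lborel Y (\<lambda>x. ennreal (f x))"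
  shows "rv_cdf M X = rv_cdf M Y"
proof
  fix x
  have "rv_cdf M X x = measure (distr M lborel X) {..x}"
    if "distributed M lborel X (\<lambda>x. ennreal (f x))" for X
    using distributed_measurable[OF that] unfolding rv_cdf_def
    by (subst measure_distr) (auto intro!: arg_cong[where f="measure M"])
  then show "rv_cdf M X x = rv_cdf M Y x" using assms
    by (simp add: distributed_distr_eq_density)
qed

theorem lemma3:
  fixes M :: "'a measure" and m :: nat
    and gS gD :: "nat \<Rightarrow> 'a \<Rightarrow> real"
    and fS fD :: "nat \<Rightarrow> real \<Rightarrow> real"
    and mu :: "nat \<Rightarrow> real"
  assumes P: "prob_space M"
    and m_pos: "m \<ge> 1"
    and indep: "prob_space.indep_vars M (\<lambda>_. borel)
                  (\<lambda>i. case i of Inl k \<Rightarrow> gS k | Inr k \<Rightarrow> gD k)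
                  (Inl ` {..<m} \<union> Inr ` {..<m})"
    and distS: "\<And>k. k < m \<Longrightarrow> distributed M lborel (gS k) (\<lambda>x. ennreal (fS k x))"
    and distD: "\<And>k. k < m \<Longrightarrow> distributed M lborel (gD k) (\<lambda>x. ennreal (fD k x))"
    and fS_nonneg: "\<And>k x. k < m \<Longrightarrow> fS k x \<ge> 0"
    and fD_nonneg: "\<And>k x. k < m \<Longrightarrow> fD k x \<ge> 0"
    and gS_nonneg: "\<And>k w. k < m \<Longrightarrow> w \<in> space M \<Longrightarrow> gS k w \<ge> 0"
    and gD_nonneg: "\<And>k w. k < m \<Longrightarrow> w \<in> space M \<Longrightarrow> gD k w \<ge> 0"
    and intS: "\<And>k. k < m \<Longrightarrow> integrable M (\<lambda>w. log 2 (1 + gS k w))"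
    and intD: "\<And>k. k < m \<Longrightarrow> integrable M (\<lambda>w. log 2 (1 + gD k w))"
    and mu_range: "\<And>k. k < m \<Longrightarrow> 0 < mu k \<and> mu k < 1"
    and balance: "\<And>k. k < m \<Longrightarrow>
        (LBINT x:{0..}. log 2 (1 + x) *
            f_GammaS m fS (\<lambda>j. rv_cdf M (gS j)) fD (\<lambda>j. rv_cdf M (gD j)) mu k x) =
        (LBINT x:{0..}. log 2 (1 + x) *
            f_GammaD m fS (\<lambda>j. rv_cdf M (gS j)) fD (\<lambda>j. rv_cdf M (gD j)) mu k x)"
  shows "avg_rate_SD M m gS gD mu =
           (\<Sum>k<m. LBINT x:{0..}. log 2 (1 + x) *
              f_GammaD m fS (\<lambda>j. rv_cdf M (gS j)) fD (\<lambda>j. rv_cdf M (gD j)) mu k x)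
         \<and> (\<forall>f. (\<forall>k<m. fS k = f \<and> fD k = f \<and> mu k = 1 / 2) \<longrightarrow>
              avg_rate_SD M m gS gD mu =
                real m * (LBINT x:{0..}. log 2 (1 + x) * f x *
                                         (rv_cdf M (gD 0) x) ^ (2 * m - 1)))"
proof -
  have part1: "avg_rate_SD M m gS gD mu =
           (\<Sum>k<m. LBINT x:{0..}. log 2 (1 + x) *
              f_GammaD m fS (\<lambda>j. rv_cdf M (gS j)) fD (\<lambda>j. rv_cdf M (gD j)) mu k x)"
    unfolding avg_rate_SD_def
    by (intro sum.cong refl rate_k[OF P indep distS distD fD_nonneg gS_nonneg gD_nonneg mu_range]) auto
  moreover have "avg_rate_SD M m gS gD mu =
                real m * (LBINT x:{0..}. log 2 (1 + x) * f x *
                                         (rv_cdf M (gD 0) x) ^ (2 * m - 1))"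
    if iid: "\<forall>k<m. fS k = f \<and> fD k = f \<and> mu k = 1 / 2" for f
  proof -
    define F where "F = rv_cdf M (gD 0)"
    have m0: "0 < m" using m_pos by simp
    have FS: "rv_cdf M (gS j) = F" if "j < m" for j
      unfolding F_def using distS[OF that] distD[OF m0] iid that m0 by (intro cdf_same) auto
    have FD: "rv_cdf M (gD j) = F" if "j < m" for j
      unfolding F_def using distD[OF that] distD[OF m0] iid that m0 by (intro cdf_same) auto
    have termeq: "(LBINT x:{0..}. log 2 (1 + x) *
              f_GammaD m fS (\<lambda>j. rv_cdf M (gS j)) fD (\<lambda>j. rv_cdf M (gD j)) mu k x)
        = (LBINT x:{0..}. log 2 (1 + x) * f x * F x ^ (2 * m - 1))" if k: "k < m" for k
    proof (rule set_lebesgue_integral_cong[OF _ allI[OF impI]])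
      fix x :: real assume "x \<in> {0..}"
      then have x: "0 \<le> x" by simp
      have "f_GammaD m fS (\<lambda>j. rv_cdf M (gS j)) fD (\<lambda>j. rv_cdf M (gD j)) mu k x
          = f x * F x * (\<Prod>j\<in>{..<m} - {k}. F x * F x)"
      proof -
        have mu: "mu j = 1 / 2" if "j < m" for j using iid that by auto
        have pw: "(1 + x) powr ((1 - 1 / 2) / (1 / 2)) - 1 = x" using x by simp
        have A: "(\<Prod>j\<in>{..<m} - {k}. rv_cdf M (gS j) ((1 + x) powr ((1 - mu k) / mu j) - 1) *
              rv_cdf M (gD j) ((1 + x) powr ((1 - mu k) / (1 - mu j)) - 1)) = (\<Prod>j\<in>{..<m} - {k}. F x * F x)"
          using k by (intro prod.cong refl) (simp add: mu x FS FD)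
        have B: "rv_cdf M (gS k) ((1 + x) powr ((1 - mu k) / mu k) - 1) = F x"
          using k by (simp add: mu x FS)
        have C: "fD k x = f x" using k iid by simp
        show ?thesis
          unfolding f_GammaD_def A B C by simp
      qed
      also have "\<dots> = f x * F x ^ (2 * m - 1)"
      proof -
        have "card ({..<m} - {k}) = m - 1" using k by simp
        then have "(\<Prod>j\<in>{..<m} - {k}. F x * F x) = F x ^ (2 * (m - 1))"
          by (simp add: power_mult power2_eq_square)
        moreover have "2 * m - 1 = Suc (2 * (m - 1))" using m0 by simp
        ultimately show ?thesis by simp
      qed
      finally show "log 2 (1 + x) * f_GammaD m fS (\<lambda>j. rv_cdf M (gS j)) fD (\<lambda>j. rv_cdf M (gD j)) mu k x
          = log 2 (1 + x) * f x * F x ^ (2 * m - 1)" by simp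
    qed simp
    show ?thesis unfolding part1 F_def[symmetric] by (simp add: termeq)
  qed
  ultimately show ?thesis by blast
qed

end
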